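(* $\mathcal{A}(D)/\mathcal{V}(D)$ is a Lie algebra if and only if every affine plane (of order $3$) in $\Pi(D)$ is a vanishing subset of $D$.
   Context: Let $G$ be a group generated by a conjugacy class $D$ of involutions such that for all $d,e\in D$ the order of $de$ is $1$, $2$ or $3$. The Fischer space $\Pi(D)$ has point set $D$ and lines the triples $\{d,e,d^e\}$ with $d,e\in D$ non-commuting; affine planes are subspaces generated by two intersecting lines that are isomorphic to the affine plane of order $3$. $\mathcal{A}(D)$ is the $\mathbb{F}_2$-vector space of finite subsets of $D$ under symmetric difference (basis $D$), with bilinear product determined by $d*e=d+e+f$ if $\{d,e,f\}$ is a line and $d*e=0$ otherwise. The bilinear form is determined by $\langle d,e\rangle=1$ if $d,e$ do not commute and $0$ otherwise; $\mathcal{V}(D)$ is its radical; a finite subset $X\subseteq D$ is vanishing if $X\in\mathcal{V}(D)$, i.e., every $d\in D$ fails to commute with an even number of elements of $X$. *)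

theory Defs
  imports "HOL-Algebra.Algebra" "HOL-Library.Numeral_Type"
begin

definition commutes :: "('a, 'b) monoid_scheme \<Rightarrow> 'a \<Rightarrow> 'a \<Rightarrow> bool" where
  "commutes G d e \<longleftrightarrow> d \<otimes>\<^bsub>G\<^esub> e = e \<otimes>\<^bsub>G\<^esub> d"

definition conjg :: "('a, 'b) monoid_scheme \<Rightarrow> 'a \<Rightarrow> 'a \<Rightarrow> 'a" where
  "conjg G d e = inv\<^bsub>G\<^esub> e \<otimes>\<^bsub>G\<^esub> d \<otimes>\<^bsub>G\<^esub> e"

definition fischer_line :: "('a, 'b) monoid_scheme \<Rightarrow> 'a set \<Rightarrow> 'a set \<Rightarrow> bool" where
  "fischer_line G D L \<longleftrightarrow>
     (\<exists>d\<in>D. \<exists>e\<in>D. \<not> commutes G d e \<and> L = {d, e, conjg G d e})"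

definition fischer_subspace :: "('a, 'b) monoid_scheme \<Rightarrow> 'a set \<Rightarrow> 'a set \<Rightarrow> bool" where
  "fischer_subspace G D S \<longleftrightarrow> S \<subseteq> D \<and>
     (\<forall>L. fischer_line G D L \<and> 2 \<le> card (L \<inter> S) \<longrightarrow> L \<subseteq> S)"

definition fischer_span :: "('a, 'b) monoid_scheme \<Rightarrow> 'a set \<Rightarrow> 'a set \<Rightarrow> 'a set" where
  "fischer_span G D P = {x. \<forall>S. fischer_subspace G D S \<and> P \<subseteq> S \<longrightarrow> x \<in> S}"

definition ag23_line :: "(3 \<times> 3) set \<Rightarrow> bool" where
  "ag23_line L \<longleftrightarrow> (\<exists>a b c d::3. (c, d) \<noteq> (0, 0) \<and> L = {(a + t * c, b + t * d) | t. True})"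

definition iso_AG23 :: "('a, 'b) monoid_scheme \<Rightarrow> 'a set \<Rightarrow> 'a set \<Rightarrow> bool" where
  "iso_AG23 G D S \<longleftrightarrow> (\<exists>f :: 'a \<Rightarrow> 3 \<times> 3. bij_betw f S UNIV \<and>
     (\<forall>L. L \<subseteq> S \<longrightarrow> (fischer_line G D L \<longleftrightarrow> ag23_line (f ` L))))"

definition fischer_affine_plane :: "('a, 'b) monoid_scheme \<Rightarrow> 'a set \<Rightarrow> 'a set \<Rightarrow> bool" where
  "fischer_affine_plane G D S \<longleftrightarrow>
     (\<exists>L1 L2. fischer_line G D L1 \<and> fischer_line G D L2 \<and> L1 \<noteq> L2 \<and> L1 \<inter> L2 \<noteq> {} \<and>
        S = fischer_span G D (L1 \<union> L2) \<and> iso_AG23 G D S)"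

(* Underlying set of A(D): finite subsets of D (addition = symmetric difference) *)
definition algA :: "'a set \<Rightarrow> 'a set set" where
  "algA D = {P. finite P \<and> P \<subseteq> D}"

definition symdiff :: "'a set \<Rightarrow> 'a set \<Rightarrow> 'a set" where
  "symdiff P Q = (P - Q) \<union> (Q - P)"

(* product of basis elements: d*e = d+e+f if {d,e,f} is a line, 0 otherwise *)
definition basis_mult :: "('a, 'b) monoid_scheme \<Rightarrow> 'a \<Rightarrow> 'a \<Rightarrow> 'a set" where
  "basis_mult G d e = (if commutes G d e then {} else {d, e, conjg G d e})"

(* bilinear extension over F_2: P*Q = sum_{d in P, e in Q} d*e *)
definition algA_mult :: "('a, 'b) monoid_scheme \<Rightarrow> 'a set \<Rightarrow> 'a set \<Rightarrow> 'a set" where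
  "algA_mult G P Q = {f. odd (card {(d, e). d \<in> P \<and> e \<in> Q \<and> f \<in> basis_mult G d e})}"

(* the radical V(D) of the form: vanishing subsets *)
definition vanishing :: "('a, 'b) monoid_scheme \<Rightarrow> 'a set \<Rightarrow> 'a set \<Rightarrow> bool" where
  "vanishing G D P \<longleftrightarrow> P \<in> algA D \<and>
     (\<forall>d\<in>D. even (card {e \<in> P. \<not> commutes G d e}))"

definition algV :: "('a, 'b) monoid_scheme \<Rightarrow> 'a set \<Rightarrow> 'a set set" where
  "algV G D = {P. vanishing G D P}"

(* A(D)/V(D) is a Lie algebra (over F_2): V(D) is an ideal, so the product descends
   to the quotient, and the induced product is alternating and satisfies Jacobi. *)
definition quotient_is_Lie :: "('a, 'b) monoid_scheme \<Rightarrow> 'a set \<Rightarrow> bool" where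
  "quotient_is_Lie G D \<longleftrightarrow>
     (\<forall>P\<in>algA D. \<forall>Q\<in>algV G D. algA_mult G P Q \<in> algV G D \<and> algA_mult G Q P \<in> algV G D) \<and>
     (\<forall>P\<in>algA D. algA_mult G P P \<in> algV G D) \<and>
     (\<forall>P\<in>algA D. \<forall>Q\<in>algA D. \<forall>R\<in>algA D.
        symdiff (symdiff (algA_mult G P (algA_mult G Q R)) (algA_mult G Q (algA_mult G R P)))
                (algA_mult G R (algA_mult G P Q)) \<in> algV G D)"

end

theory Submission imports Defs "HOL-Library.Z2" "HOL-Library.Product_Plus" begin

declare add_bit_eq_xor[simp del] mult_bit_eq_and[simp del]

locale tg = group G for G :: "('a, 'b) monoid_scheme" (structure) +
  fixes D :: "'a set"
  assumes DG: "D \<subseteq> carrier G"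
    and invo: "d \<in> D \<Longrightarrow> d \<otimes> d = \<one>"
    and clo: "a \<in> D \<Longrightarrow> b \<in> D \<Longrightarrow> a \<otimes> b \<otimes> a \<in> D"
    and tri: "a \<in> D \<Longrightarrow> b \<in> D \<Longrightarrow> a \<otimes> b \<noteq> b \<otimes> a \<Longrightarrow> a \<otimes> b \<otimes> a = b \<otimes> a \<otimes> b"
begin

definition s :: "'a \<Rightarrow> 'a \<Rightarrow> 'a" where "s a b = a \<otimes> b \<otimes> a"

lemma inD[simp]: "a \<in> D \<Longrightarrow> a \<in> carrier G" using DG by auto

lemma invo2[simp]: "a \<in> D \<Longrightarrow> a \<otimes> (a \<otimes> x) = x" if "x \<in> carrier G"
  using that by (simp add: m_assoc[symmetric] invo)

lemma inv_D: "a \<in> D \<Longrightarrow> inv a = a"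
  using inv_equality[of a a] invo by simp

lemma comm_iff: "a \<in> D \<Longrightarrow> b \<in> D \<Longrightarrow> a \<otimes> b = b \<otimes> a \<longleftrightarrow> s a b = b"
proof -
  assume a: "a \<in> D" and b: "b \<in> D"
  show ?thesis
  proof
    assume "a \<otimes> b = b \<otimes> a"
    then show "s a b = b" using a b by (simp add: s_def m_assoc invo)
  next
    assume h: "s a b = b"
    have "a \<otimes> b = a \<otimes> b \<otimes> a \<otimes> a" using a b by (simp add: m_assoc invo)
    also have "\<dots> = b \<otimes> a" using h by (simp add: s_def)
    finally show "a \<otimes> b = b \<otimes> a" .
  qed
qed

lemma s_in: "a \<in> D \<Longrightarrow> b \<in> D \<Longrightarrow> s a b \<in> D" by (simp add: s_def clo)
lemma s_idem: "a \<in> D \<Longrightarrow> s a a = a" by (simp add: s_def invo)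
lemma s_inv: "a \<in> D \<Longrightarrow> b \<in> D \<Longrightarrow> s a (s a b) = b"
  by (simp add: s_def m_assoc invo)
lemma s_dist: "a \<in> D \<Longrightarrow> b \<in> D \<Longrightarrow> c \<in> D \<Longrightarrow> s c (s a b) = s (s c a) (s c b)"
  by (simp add: s_def m_assoc invo)
lemma s_csym: "a \<in> D \<Longrightarrow> b \<in> D \<Longrightarrow> s a b = b \<Longrightarrow> s b a = a"
  by (metis comm_iff)
lemma s_swap: "a \<in> D \<Longrightarrow> b \<in> D \<Longrightarrow> s a b \<noteq> b \<Longrightarrow> s a b = s b a"
  by (metis comm_iff tri s_def)
lemma s_ax7: "a \<in> D \<Longrightarrow> b \<in> D \<Longrightarrow> c \<in> D \<Longrightarrow> s b c \<noteq> c \<Longrightarrow> s a c = c \<Longrightarrow> s a (s b c) = s b c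
   \<Longrightarrow> s a b = b"
proof -
  assume a: "a \<in> D" and b: "b \<in> D" and c: "c \<in> D" and nbc: "s b c \<noteq> c"
    and ac: "s a c = c" and abc: "s a (s b c) = s b c"
  have bcD: "s b c \<in> D" using b c by (rule s_in)
  have e1: "a \<otimes> c = c \<otimes> a" using comm_iff[OF a c] ac by simp
  have e2: "a \<otimes> s b c = s b c \<otimes> a" using comm_iff[OF a bcD] abc by simp
  have t: "s b c = s c b" using s_swap[OF b c nbc] .
  have "c \<otimes> s b c = b \<otimes> c" using t b c by (simp add: s_def m_assoc invo)
  have "a \<otimes> (b \<otimes> c) = (b \<otimes> c) \<otimes> a"
  proof -
    have "a \<otimes> (b \<otimes> c) = a \<otimes> (c \<otimes> s b c)" using \<open>c \<otimes> s b c = b \<otimes> c\<close> by simp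
    also have "\<dots> = c \<otimes> (a \<otimes> s b c)" using a b c bcD e1 by (simp add: m_assoc[symmetric])
    also have "\<dots> = c \<otimes> (s b c \<otimes> a)" using e2 by simp
    also have "\<dots> = (b \<otimes> c) \<otimes> a" using \<open>c \<otimes> s b c = b \<otimes> c\<close> a b c bcD by (simp add: m_assoc[symmetric])
    finally show ?thesis .
  qed
  then have "a \<otimes> b \<otimes> c = b \<otimes> a \<otimes> c" using a b c e1 by (simp add: m_assoc)
  then have "a \<otimes> b = b \<otimes> a" using a b c by (metis m_closed inD r_cancel)
  then show ?thesis using comm_iff[OF a b] by simp
qed

lemma nc_sym: "a \<in> D \<Longrightarrow> b \<in> D \<Longrightarrow> s a b = b \<longleftrightarrow> s b a = a"
  using s_csym by blast

lemma s_cancel: "c \<in> D \<Longrightarrow> a \<in> D \<Longrightarrow> b \<in> D \<Longrightarrow> s c a = s c b \<longleftrightarrow> a = b"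
  by (metis s_inv)

lemma pres: "a \<in> D \<Longrightarrow> b \<in> D \<Longrightarrow> c \<in> D \<Longrightarrow> s (s c a) (s c b) = s c b \<longleftrightarrow> s a b = b"
  by (metis s_dist s_cancel s_in)

lemma commutes_iff: "a \<in> D \<Longrightarrow> b \<in> D \<Longrightarrow> commutes G a b \<longleftrightarrow> s a b = b"
  by (simp add: commutes_def comm_iff)

lemma conjg_eq: "a \<in> D \<Longrightarrow> b \<in> D \<Longrightarrow> conjg G a b = s b a"
  by (simp add: conjg_def s_def inv_D)

definition B :: "'a \<Rightarrow> 'a \<Rightarrow> 'a set" where
  "B d e = (if s d e = e then {} else {d, e, s e d})"

lemma basis_eq: "d \<in> D \<Longrightarrow> e \<in> D \<Longrightarrow> basis_mult G d e = B d e"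
  by (simp add: basis_mult_def B_def commutes_iff conjg_eq)

lemma B_sym: "d \<in> D \<Longrightarrow> e \<in> D \<Longrightarrow> B d e = B e d"
  unfolding B_def by (metis insert_commute nc_sym s_swap)

lemma B_sub: "d \<in> D \<Longrightarrow> e \<in> D \<Longrightarrow> B d e \<subseteq> D"
  unfolding B_def by (auto intro: s_in)

lemma B_fin[simp]: "finite (B d e)"
  unfolding B_def by auto

lemma B_self[simp]: "d \<in> D \<Longrightarrow> B d d = {}"
  unfolding B_def by (simp add: s_idem)

lemma line3:
  assumes p: "p \<in> D" and q: "q \<in> D" and n: "s p q \<noteq> q"
  shows "p \<noteq> q" "s q p \<noteq> p" "s q p \<noteq> q" "s p q = s q p"
    "s p (s q p) = q" "s q (s q p) = p" "s (s q p) p = q" "s (s q p) q = p"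
    "s (s q p) p \<noteq> p" "s (s q p) q \<noteq> q" "s p (s q p) \<noteq> s q p" "s q (s q p) \<noteq> s q p"
proof -
  have sw: "s p q = s q p" using s_swap[OF p q n] .
  have r: "s q p \<in> D" using s_in[OF q p] .
  show "p \<noteq> q" using n s_idem[OF p] by auto
  show "s q p \<noteq> p" using n nc_sym[OF p q] by simp
  show "s q p \<noteq> q" using n sw by simp
  show "s p q = s q p" by (rule sw)
  show e1: "s p (s q p) = q" using sw s_inv[OF p q] by simp
  show e2: "s q (s q p) = p" using s_inv[OF q p] .
  have np: "s p (s q p) \<noteq> s q p" using e1 \<open>s q p \<noteq> q\<close> by simp
  have nq: "s q (s q p) \<noteq> s q p" using e2 \<open>s q p \<noteq> p\<close> by simp
  show "s (s q p) p = q" using s_swap[OF p r np] e1 by simp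
  show "s (s q p) q = p" using s_swap[OF q r nq] e2 by simp
  show "s (s q p) p \<noteq> p" using \<open>s (s q p) p = q\<close> \<open>p \<noteq> q\<close> by simp
  show "s (s q p) q \<noteq> q" using \<open>s (s q p) q = p\<close> \<open>p \<noteq> q\<close> by simp
  show "s p (s q p) \<noteq> s q p" by (rule np)
  show "s q (s q p) \<noteq> s q p" by (rule nq)
qed

end

definition chi :: "'a set \<Rightarrow> 'a \<Rightarrow> bit" where "chi A y = (if y \<in> A then (1::bit) else 0)"

lemma of_nat_bit: "(of_nat n :: bit) = (if odd n then 1 else 0)"
  by (induction n) auto

lemma card_bit: "finite A \<Longrightarrow> (of_nat (card A) :: bit) = (\<Sum>x\<in>A. 1)"
  by simp

lemma chi_symdiff: "chi (symdiff M N) x = chi M x + chi N x"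
  by (auto simp: chi_def symdiff_def)

lemma set_eq_chi: "M = N \<longleftrightarrow> (\<forall>x. chi M x = chi N x)"
  by (auto simp: chi_def fun_eq_iff split: if_splits)

lemma sum_chi: "finite U \<Longrightarrow> M \<subseteq> U \<Longrightarrow> (\<Sum>x\<in>M. h x) = (\<Sum>x\<in>U. chi M x * h x)"
proof -
  assume "finite U" "M \<subseteq> U"
  then have "(\<Sum>x\<in>U. chi M x * h x) = (\<Sum>x\<in>M. chi M x * h x)"
    by (intro sum.mono_neutral_right) (auto simp: chi_def)
  then show ?thesis by (simp add: chi_def)
qed

lemma odd_card_filter: "finite A \<Longrightarrow> odd (card {x\<in>A. P x}) \<longleftrightarrow> (\<Sum>x\<in>A. (if P x then 1 else 0) :: bit) = 1"
proof -
  assume f: "finite A"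
  have "(\<Sum>x\<in>A. (if P x then 1 else 0) :: bit) = (\<Sum>x\<in>{x\<in>A. P x}. 1)"
    using f by (simp add: sum.If_cases Int_def)
  also have "\<dots> = of_nat (card {x\<in>A. P x})" by simp
  finally show ?thesis by (simp add: of_nat_bit)
qed


context tg
begin

definition ncb :: "'a \<Rightarrow> 'a \<Rightarrow> bit" where "ncb g x = (if s g x = x then 0 else 1)"

lemma mult_chi:
  assumes P: "finite P" "P \<subseteq> D" and Q: "finite Q" "Q \<subseteq> D"
  shows "chi (algA_mult G P Q) z = (\<Sum>d\<in>P. \<Sum>e\<in>Q. chi (B d e) z)"
proof -
  have set: "{(d, e). d \<in> P \<and> e \<in> Q \<and> z \<in> basis_mult G d e} = {x \<in> P \<times> Q. z \<in> B (fst x) (snd x)}"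
    using P Q by (auto simp: basis_eq subset_iff)
  have fin: "finite (P \<times> Q)" using P Q by simp
  have "z \<in> algA_mult G P Q \<longleftrightarrow> odd (card {x \<in> P \<times> Q. z \<in> B (fst x) (snd x)})"
    unfolding algA_mult_def using set by simp
  also have "\<dots> \<longleftrightarrow> (\<Sum>x\<in>P \<times> Q. (if z \<in> B (fst x) (snd x) then 1 else 0) :: bit) = 1"
    by (rule odd_card_filter[OF fin])
  finally have "z \<in> algA_mult G P Q \<longleftrightarrow> (\<Sum>x\<in>P \<times> Q. (if z \<in> B (fst x) (snd x) then 1 else 0) :: bit) = 1" .
  moreover have "(\<Sum>x\<in>P \<times> Q. (if z \<in> B (fst x) (snd x) then 1 else 0) :: bit) = (\<Sum>d\<in>P. \<Sum>e\<in>Q. chi (B d e) z)"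
    by (simp add: sum.cartesian_product chi_def case_prod_beta)
  ultimately show ?thesis by (auto simp: chi_def)
qed

lemma mult_sub:
  assumes P: "finite P" "P \<subseteq> D" and Q: "finite Q" "Q \<subseteq> D"
  shows "algA_mult G P Q \<subseteq> (\<Union>d\<in>P. \<Union>e\<in>Q. B d e)"
proof
  fix z assume "z \<in> algA_mult G P Q"
  then have "odd (card {(d, e). d \<in> P \<and> e \<in> Q \<and> z \<in> basis_mult G d e})" by (simp add: algA_mult_def)
  then have "{(d, e). d \<in> P \<and> e \<in> Q \<and> z \<in> basis_mult G d e} \<noteq> {}" by (metis card.empty even_zero)
  then obtain d e where de: "d \<in> P" "e \<in> Q" "z \<in> basis_mult G d e" by blast
  then have "z \<in> B d e" using P Q basis_eq[of d e] by blast
  then show "z \<in> (\<Union>d\<in>P. \<Union>e\<in>Q. B d e)" using de by blast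
qed

lemma mult_fin: "finite P \<Longrightarrow> P \<subseteq> D \<Longrightarrow> finite Q \<Longrightarrow> Q \<subseteq> D \<Longrightarrow> finite (algA_mult G P Q)"
  by (rule finite_subset[OF mult_sub]) auto

lemma mult_D: "finite P \<Longrightarrow> P \<subseteq> D \<Longrightarrow> finite Q \<Longrightarrow> Q \<subseteq> D \<Longrightarrow> algA_mult G P Q \<subseteq> D"
proof -
  assume a: "finite P" "P \<subseteq> D" "finite Q" "Q \<subseteq> D"
  have "(\<Union>d\<in>P. \<Union>e\<in>Q. B d e) \<subseteq> D" using a B_sub by blast
  then show ?thesis using mult_sub[OF a] by blast
qed

lemma vanishing_iff:
  "vanishing G D M \<longleftrightarrow> finite M \<and> M \<subseteq> D \<and> (\<forall>g\<in>D. (\<Sum>x\<in>M. ncb g x) = 0)"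
proof -
  have "finite M \<Longrightarrow> M \<subseteq> D \<Longrightarrow> g \<in> D \<Longrightarrow> even (card {e \<in> M. \<not> commutes G g e}) \<longleftrightarrow> (\<Sum>x\<in>M. ncb g x) = 0" for g
  proof -
    assume f: "finite M" and MD: "M \<subseteq> D" and g: "g \<in> D"
    have "{e \<in> M. \<not> commutes G g e} = {e \<in> M. s g e \<noteq> e}" using MD g by (auto simp: commutes_iff)
    moreover have "(\<Sum>x\<in>M. ncb g x) = (\<Sum>x\<in>M. (if s g x \<noteq> x then 1 else 0))" by (rule sum.cong) (auto simp: ncb_def)
    ultimately show ?thesis using odd_card_filter[OF f, of "\<lambda>e. s g e \<noteq> e"] by auto
  qed
  note h = this
  show ?thesis
  proof
    assume v: "vanishing G D M"
    then have f: "finite M" and MD: "M \<subseteq> D" and e: "\<forall>g\<in>D. even (card {e \<in> M. \<not> commutes G g e})"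
      unfolding vanishing_def algA_def by simp_all
    have "\<forall>g\<in>D. (\<Sum>x\<in>M. ncb g x) = 0"
    proof
      fix g assume g: "g \<in> D"
      show "(\<Sum>x\<in>M. ncb g x) = 0" using h[OF f MD g] e g by simp
    qed
    then show "finite M \<and> M \<subseteq> D \<and> (\<forall>g\<in>D. (\<Sum>x\<in>M. ncb g x) = 0)"
      using f MD by simp
  next
    assume r: "finite M \<and> M \<subseteq> D \<and> (\<forall>g\<in>D. (\<Sum>x\<in>M. ncb g x) = 0)"
    then have f: "finite M" and MD: "M \<subseteq> D" by auto
    have "\<forall>g\<in>D. even (card {e \<in> M. \<not> commutes G g e})"
    proof
      fix g assume g: "g \<in> D"
      show "even (card {e \<in> M. \<not> commutes G g e})" using h[OF f MD g] r g by simp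
    qed
    then show "vanishing G D M" using f MD by (simp add: vanishing_def algA_def)
  qed
qed

lemma combo:
  assumes I: "finite I" and Fam: "\<And>i. i \<in> I \<Longrightarrow> vanishing G D (Fam i)"
    and M: "\<And>z. chi M z = (\<Sum>i\<in>I. chi (Fam i) z)"
  shows "vanishing G D M"
proof -
  define U where "U = (\<Union>i\<in>I. Fam i)"
  have YU: "\<And>i. i \<in> I \<Longrightarrow> Fam i \<subseteq> U" by (auto simp: U_def)
  have Yf: "finite (Fam i) \<and> Fam i \<subseteq> D" if i: "i \<in> I" for i
  proof -
    have "vanishing G D (Fam i)" by (rule Fam[OF i])
    then show ?thesis unfolding vanishing_def algA_def by blast
  qed
  have Uf: "finite U" unfolding U_def using I Yf by blast
  have UD: "U \<subseteq> D" unfolding U_def using Yf by blast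
  have MU: "M \<subseteq> U"
  proof
    fix z assume z: "z \<in> M"
    show "z \<in> U"
    proof (rule ccontr)
      assume "z \<notin> U"
      then have "\<forall>i\<in>I. chi (Fam i) z = 0" by (auto simp: U_def chi_def)
      then have "chi M z = 0" using M by simp
      with z show False by (simp add: chi_def)
    qed
  qed
  have "\<forall>g\<in>D. (\<Sum>x\<in>M. ncb g x) = 0"
  proof
    fix g assume g: "g \<in> D"
    have "(\<Sum>x\<in>M. ncb g x) = (\<Sum>x\<in>U. chi M x * ncb g x)" by (rule sum_chi[OF Uf MU])
    also have "\<dots> = (\<Sum>x\<in>U. \<Sum>i\<in>I. chi (Fam i) x * ncb g x)" by (simp add: M sum_distrib_right)
    also have "\<dots> = (\<Sum>i\<in>I. \<Sum>x\<in>U. chi (Fam i) x * ncb g x)" by (rule sum.swap)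
    also have "\<dots> = (\<Sum>i\<in>I. \<Sum>x\<in>Fam i. ncb g x)"
      by (rule sum.cong[OF refl]) (simp add: sum_chi[OF Uf YU])
    also have "\<dots> = 0" using Fam g unfolding vanishing_iff by simp
    finally show "(\<Sum>x\<in>M. ncb g x) = 0" .
  qed
  moreover have "finite M" using finite_subset[OF MU Uf] .
  moreover have "M \<subseteq> D" using MU UD by blast
  ultimately show ?thesis unfolding vanishing_iff by blast
qed


lemma bit_add_self[simp]: "x + x = (0::bit)"
  by (cases x) auto

lemma ncb_sym: "a \<in> D \<Longrightarrow> b \<in> D \<Longrightarrow> ncb a b = ncb b a"
  unfolding ncb_def using nc_sym by auto

lemma ncb_self[simp]: "a \<in> D \<Longrightarrow> ncb a a = 0"
  unfolding ncb_def by (simp add: s_idem)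

lemma ncb_pres: "a \<in> D \<Longrightarrow> b \<in> D \<Longrightarrow> c \<in> D \<Longrightarrow> ncb (s c a) (s c b) = ncb a b"
  unfolding ncb_def using pres by simp

lemma B_nc: "p \<in> D \<Longrightarrow> q \<in> D \<Longrightarrow> s p q \<noteq> q \<Longrightarrow> (\<Sum>x\<in>B p q. f x) = f p + f q + f (s q p)"
proof -
  assume p: "p \<in> D" and q: "q \<in> D" and n: "s p q \<noteq> q"
  note l = line3[OF p q n]
  have "B p q = {p, q, s q p}" using n by (simp add: B_def)
  then show ?thesis using l by (simp add: add.assoc)
qed

lemma B_c: "s p q = q \<Longrightarrow> B p q = {}"
  by (simp add: B_def)

lemma assoc_basis:
  assumes g: "g \<in> D" and p: "p \<in> D" and q: "q \<in> D"
  shows "(\<Sum>x\<in>B p q. ncb g x) = (\<Sum>y\<in>B g p. ncb y q)"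
proof (cases "s p q = q")
  case pq: True
  show ?thesis
  proof (cases "s g p = p")
    case True then show ?thesis using pq by (simp add: B_c)
  next
    case False
    have "ncb (s p g) q = ncb (s p g) (s p q)" using pq by simp
    also have "\<dots> = ncb g q" using ncb_pres[OF g q p] .
    finally have e: "ncb (s p g) q = ncb g q" .
    have z: "ncb p q = 0" using pq by (simp add: ncb_def)
    show ?thesis using B_nc[OF g p False, of "\<lambda>y. ncb y q"] pq e z by (simp add: B_c)
  qed
next
  case pq: False
  have sw: "s p q = s q p" using s_swap[OF p q pq] .
  show ?thesis
  proof (cases "s g p = p")
    case True
    then have gp: "s p g = g" using nc_sym[OF g p] by simp
    have "ncb g (s p q) = ncb (s p g) (s p (s p q))" using ncb_pres[OF g s_in[OF p q] p] by simp
    then have "ncb g (s q p) = ncb g q" using sw gp s_inv[OF p q] by simp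
    moreover have "ncb g p = 0" using True by (simp add: ncb_def)
    ultimately show ?thesis using B_nc[OF p q pq, of "ncb g"] True by (simp add: B_c add.assoc)
  next
    case False
    have "ncb (s p g) q = ncb (s p g) (s p (s p q))" using s_inv[OF p q] by simp
    also have "\<dots> = ncb g (s p q)" using ncb_pres[OF g s_in[OF p q] p] .
    finally have e: "ncb (s p g) q = ncb g (s q p)" using sw by simp
    have o1: "ncb g p = 1" using False by (simp add: ncb_def)
    have o2: "ncb p q = 1" using pq by (simp add: ncb_def)
    show ?thesis using B_nc[OF p q pq, of "ncb g"] B_nc[OF g p False, of "\<lambda>y. ncb y q"] e o1 o2
      by (simp add: ac_simps)
  qed
qed

lemma swap3:
  fixes f :: "'d \<Rightarrow> 'e \<Rightarrow> 'x \<Rightarrow> bit" and h :: "'x \<Rightarrow> bit"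
  shows "(\<Sum>x\<in>U. (\<Sum>d\<in>P. \<Sum>e\<in>Q. f d e x) * h x) = (\<Sum>d\<in>P. \<Sum>e\<in>Q. \<Sum>x\<in>U. f d e x * h x)"
proof -
  have "(\<Sum>x\<in>U. (\<Sum>d\<in>P. \<Sum>e\<in>Q. f d e x) * h x) = (\<Sum>x\<in>U. \<Sum>d\<in>P. \<Sum>e\<in>Q. f d e x * h x)"
    by (simp add: sum_distrib_right)
  also have "\<dots> = (\<Sum>d\<in>P. \<Sum>x\<in>U. \<Sum>e\<in>Q. f d e x * h x)" by (rule sum.swap)
  also have "\<dots> = (\<Sum>d\<in>P. \<Sum>e\<in>Q. \<Sum>x\<in>U. f d e x * h x)" by (rule sum.cong[OF refl], rule sum.swap)
  finally show ?thesis .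
qed

lemma ideal:
  assumes P: "finite P" "P \<subseteq> D" and Q: "vanishing G D Q"
  shows "vanishing G D (algA_mult G P Q)"
proof -
  have Qf: "finite Q" and QD: "Q \<subseteq> D" and Q0: "\<And>y. y \<in> D \<Longrightarrow> (\<Sum>e\<in>Q. ncb y e) = 0"
    using Q unfolding vanishing_iff by auto
  define U where "U = (\<Union>d\<in>P. \<Union>e\<in>Q. B d e)"
  have Uf: "finite U" unfolding U_def using P Qf by simp
  have MU: "algA_mult G P Q \<subseteq> U" unfolding U_def by (rule mult_sub[OF P Qf QD])
  have BU: "d \<in> P \<Longrightarrow> e \<in> Q \<Longrightarrow> B d e \<subseteq> U" for d e unfolding U_def by blast
  have "(\<Sum>x\<in>algA_mult G P Q. ncb g x) = 0" if g: "g \<in> D" for g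
  proof -
    have "(\<Sum>x\<in>algA_mult G P Q. ncb g x) = (\<Sum>x\<in>U. chi (algA_mult G P Q) x * ncb g x)"
      by (rule sum_chi[OF Uf MU])
    also have "\<dots> = (\<Sum>x\<in>U. (\<Sum>d\<in>P. \<Sum>e\<in>Q. chi (B d e) x) * ncb g x)"
      by (simp add: mult_chi[OF P Qf QD])
    also have "\<dots> = (\<Sum>d\<in>P. \<Sum>e\<in>Q. \<Sum>x\<in>U. chi (B d e) x * ncb g x)" by (rule swap3)
    also have "\<dots> = (\<Sum>d\<in>P. \<Sum>e\<in>Q. \<Sum>x\<in>B d e. ncb g x)"
      apply (rule sum.cong[OF refl])
      apply (rule sum.cong[OF refl])
      subgoal for d e by (rule sum_chi[OF Uf BU, symmetric])
      done
    also have "\<dots> = (\<Sum>d\<in>P. \<Sum>e\<in>Q. \<Sum>y\<in>B g d. ncb y e)"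
      apply (rule sum.cong[OF refl])
      apply (rule sum.cong[OF refl])
      subgoal for d e using P QD g by (intro assoc_basis) auto
      done
    also have "\<dots> = (\<Sum>d\<in>P. \<Sum>y\<in>B g d. \<Sum>e\<in>Q. ncb y e)"
      by (rule sum.cong[OF refl], rule sum.swap)
    also have "\<dots> = 0"
    proof (rule sum.neutral, rule ballI)
      fix d assume d: "d \<in> P"
      show "(\<Sum>y\<in>B g d. \<Sum>e\<in>Q. ncb y e) = 0"
      proof (rule sum.neutral, rule ballI)
        fix y assume y: "y \<in> B g d"
        have "y \<in> D" using B_sub[OF g, of d] d P y by blast
        then show "(\<Sum>e\<in>Q. ncb y e) = 0" by (rule Q0)
      qed
    qed
    finally show ?thesis .
  qed
  moreover have "finite (algA_mult G P Q)" by (rule mult_fin[OF P Qf QD])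
  moreover have "algA_mult G P Q \<subseteq> D" by (rule mult_D[OF P Qf QD])
  ultimately show ?thesis unfolding vanishing_iff by blast
qed


lemma mult_comm:
  assumes P: "finite P" "P \<subseteq> D" and Q: "finite Q" "Q \<subseteq> D"
  shows "algA_mult G P Q = algA_mult G Q P"
proof -
  have "chi (algA_mult G P Q) z = chi (algA_mult G Q P) z" for z
  proof -
    have "chi (algA_mult G P Q) z = (\<Sum>d\<in>P. \<Sum>e\<in>Q. chi (B d e) z)" by (rule mult_chi[OF P Q])
    also have "\<dots> = (\<Sum>e\<in>Q. \<Sum>d\<in>P. chi (B d e) z)" by (rule sum.swap)
    also have "\<dots> = (\<Sum>e\<in>Q. \<Sum>d\<in>P. chi (B e d) z)"
      apply (rule sum.cong[OF refl])
      apply (rule sum.cong[OF refl])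
      subgoal for e d using P(2) Q(2) by (metis B_sym subsetD)
      done
    also have "\<dots> = chi (algA_mult G Q P) z" by (rule mult_chi[OF Q P, symmetric])
    finally show ?thesis .
  qed
  then show ?thesis by (simp add: set_eq_chi)
qed

lemma sum_sym_zero:
  fixes f :: "'x \<Rightarrow> 'x \<Rightarrow> bit"
  assumes "finite P" "\<And>d e. d \<in> P \<Longrightarrow> e \<in> P \<Longrightarrow> f d e = f e d" "\<And>d. d \<in> P \<Longrightarrow> f d d = 0"
  shows "(\<Sum>d\<in>P. \<Sum>e\<in>P. f d e) = 0"
  using assms
proof (induction P rule: finite_induct)
  case empty then show ?case by simp
next
  case (insert a F)
  have IH: "(\<Sum>d\<in>F. \<Sum>e\<in>F. f d e) = 0" using insert by auto
  have sy: "(\<Sum>d\<in>F. f d a) = (\<Sum>e\<in>F. f a e)"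
    by (rule sum.cong[OF refl]) (use insert in auto)
  have "(\<Sum>d\<in>insert a F. \<Sum>e\<in>insert a F. f d e) =
        (f a a + (\<Sum>e\<in>F. f a e)) + (\<Sum>d\<in>F. f d a + (\<Sum>e\<in>F. f d e))"
    using insert by simp
  also have "\<dots> = f a a + ((\<Sum>e\<in>F. f a e) + (\<Sum>d\<in>F. f d a)) + (\<Sum>d\<in>F. \<Sum>e\<in>F. f d e)"
    by (simp add: sum.distrib ac_simps)
  also have "\<dots> = 0" using IH sy insert by simp
  finally show ?case .
qed

lemma mult_self:
  assumes P: "finite P" "P \<subseteq> D"
  shows "algA_mult G P P = {}"
proof -
  have "chi (algA_mult G P P) z = 0" for z
  proof -
    have "chi (algA_mult G P P) z = (\<Sum>d\<in>P. \<Sum>e\<in>P. chi (B d e) z)" by (rule mult_chi[OF P P])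
    also have "\<dots> = 0"
      by (rule sum_sym_zero) (use P B_sym in \<open>auto simp: chi_def\<close>)
    finally show ?thesis .
  qed
  then have "\<forall>z. z \<notin> algA_mult G P P" by (metis chi_def one_neq_zero)
  then show ?thesis by blast
qed

lemma mult_single:
  assumes M: "finite M" "M \<subseteq> D" and p: "p \<in> D"
  shows "chi (algA_mult G {p} M) z = (\<Sum>y\<in>M. chi (B p y) z)"
  using mult_chi[of "{p}" M z] M p by simp

lemma mult_pair: "p \<in> D \<Longrightarrow> q \<in> D \<Longrightarrow> algA_mult G {p} {q} = B p q"
  using mult_chi[of "{p}" "{q}"] by (simp add: set_eq_chi)

lemma triple:
  assumes P: "finite P" "P \<subseteq> D" and Q: "finite Q" "Q \<subseteq> D" and R: "finite R" "R \<subseteq> D"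
  shows "chi (algA_mult G P (algA_mult G Q R)) z =
    (\<Sum>p\<in>P. \<Sum>q\<in>Q. \<Sum>r\<in>R. chi (algA_mult G {p} (B q r)) z)"
proof -
  define M where "M = algA_mult G Q R"
  define U where "U = (\<Union>q\<in>Q. \<Union>r\<in>R. B q r)"
  have Uf: "finite U" unfolding U_def using Q R by simp
  have MU: "M \<subseteq> U" unfolding U_def M_def by (rule mult_sub[OF Q R])
  have BU: "q \<in> Q \<Longrightarrow> r \<in> R \<Longrightarrow> B q r \<subseteq> U" for q r unfolding U_def by blast
  have Mf: "finite M" "M \<subseteq> D" unfolding M_def using mult_fin[OF Q R] mult_D[OF Q R] by auto
  have "chi (algA_mult G P M) z = (\<Sum>p\<in>P. \<Sum>y\<in>M. chi (B p y) z)"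
    using mult_chi[OF P Mf] by simp
  also have "\<dots> = (\<Sum>p\<in>P. \<Sum>y\<in>U. chi M y * chi (B p y) z)"
    by (rule sum.cong[OF refl], rule sum_chi[OF Uf MU])
  also have "\<dots> = (\<Sum>p\<in>P. \<Sum>y\<in>U. (\<Sum>q\<in>Q. \<Sum>r\<in>R. chi (B q r) y) * chi (B p y) z)"
    unfolding M_def by (simp add: mult_chi[OF Q R])
  also have "\<dots> = (\<Sum>p\<in>P. \<Sum>q\<in>Q. \<Sum>r\<in>R. \<Sum>y\<in>U. chi (B q r) y * chi (B p y) z)"
    by (rule sum.cong[OF refl], rule swap3)
  also have "\<dots> = (\<Sum>p\<in>P. \<Sum>q\<in>Q. \<Sum>r\<in>R. \<Sum>y\<in>B q r. chi (B p y) z)"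
    apply (rule sum.cong[OF refl])
    apply (rule sum.cong[OF refl])
    apply (rule sum.cong[OF refl])
    subgoal for p q r by (rule sum_chi[OF Uf BU, symmetric])
    done
  also have "\<dots> = (\<Sum>p\<in>P. \<Sum>q\<in>Q. \<Sum>r\<in>R. chi (algA_mult G {p} (B q r)) z)"
    apply (rule sum.cong[OF refl])
    apply (rule sum.cong[OF refl])
    apply (rule sum.cong[OF refl])
    subgoal for p q r using P Q R B_sub[of q r] by (subst mult_single) auto
    done
  finally show ?thesis unfolding M_def .
qed

definition Jac :: "'a set \<Rightarrow> 'a set \<Rightarrow> 'a set \<Rightarrow> 'a set" where
  "Jac P Q R = symdiff (symdiff (algA_mult G P (algA_mult G Q R)) (algA_mult G Q (algA_mult G R P)))
                (algA_mult G R (algA_mult G P Q))"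

definition jt :: "'a \<Rightarrow> 'a \<Rightarrow> 'a \<Rightarrow> 'a \<Rightarrow> bit" where
  "jt p q r z = chi (algA_mult G {p} (B q r)) z + chi (algA_mult G {q} (B r p)) z + chi (algA_mult G {r} (B p q)) z"

lemma jac_chi:
  assumes P: "finite P" "P \<subseteq> D" and Q: "finite Q" "Q \<subseteq> D" and R: "finite R" "R \<subseteq> D"
  shows "chi (Jac P Q R) z = (\<Sum>p\<in>P. \<Sum>q\<in>Q. \<Sum>r\<in>R. jt p q r z)"
proof -
  have a: "chi (algA_mult G Q (algA_mult G R P)) z = (\<Sum>p\<in>P. \<Sum>q\<in>Q. \<Sum>r\<in>R. chi (algA_mult G {q} (B r p)) z)"
  proof -
    have "chi (algA_mult G Q (algA_mult G R P)) z = (\<Sum>q\<in>Q. \<Sum>r\<in>R. \<Sum>p\<in>P. chi (algA_mult G {q} (B r p)) z)"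
      by (rule triple[OF Q R P])
    also have "\<dots> = (\<Sum>q\<in>Q. \<Sum>p\<in>P. \<Sum>r\<in>R. chi (algA_mult G {q} (B r p)) z)"
      by (rule sum.cong[OF refl], rule sum.swap)
    also have "\<dots> = (\<Sum>p\<in>P. \<Sum>q\<in>Q. \<Sum>r\<in>R. chi (algA_mult G {q} (B r p)) z)"
      by (rule sum.swap)
    finally show ?thesis .
  qed
  have b: "chi (algA_mult G R (algA_mult G P Q)) z = (\<Sum>p\<in>P. \<Sum>q\<in>Q. \<Sum>r\<in>R. chi (algA_mult G {r} (B p q)) z)"
  proof -
    have "chi (algA_mult G R (algA_mult G P Q)) z = (\<Sum>r\<in>R. \<Sum>p\<in>P. \<Sum>q\<in>Q. chi (algA_mult G {r} (B p q)) z)"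
      by (rule triple[OF R P Q])
    also have "\<dots> = (\<Sum>p\<in>P. \<Sum>r\<in>R. \<Sum>q\<in>Q. chi (algA_mult G {r} (B p q)) z)"
      by (rule sum.swap)
    also have "\<dots> = (\<Sum>p\<in>P. \<Sum>q\<in>Q. \<Sum>r\<in>R. chi (algA_mult G {r} (B p q)) z)"
      by (rule sum.cong[OF refl], rule sum.swap)
    finally show ?thesis .
  qed
  show ?thesis unfolding Jac_def chi_symdiff triple[OF P Q R] a b jt_def
    by (simp add: sum.distrib)
qed

lemma jac_single:
  assumes "p \<in> D" "q \<in> D" "r \<in> D"
  shows "chi (Jac {p} {q} {r}) z = jt p q r z"
  using jac_chi[of "{p}" "{q}" "{r}" z] assms by simp

lemma jac_van:
  assumes P: "finite P" "P \<subseteq> D" and Q: "finite Q" "Q \<subseteq> D" and R: "finite R" "R \<subseteq> D"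
    and J: "\<And>p q r. p \<in> D \<Longrightarrow> q \<in> D \<Longrightarrow> r \<in> D \<Longrightarrow> vanishing G D (Jac {p} {q} {r})"
  shows "vanishing G D (Jac P Q R)"
proof (rule combo[where I = "P \<times> Q \<times> R" and Fam = "\<lambda>(p, q, r). Jac {p} {q} {r}"])
  show "finite (P \<times> Q \<times> R)" using P Q R by simp
  show "vanishing G D ((\<lambda>(p, q, r). Jac {p} {q} {r}) i)" if i: "i \<in> P \<times> Q \<times> R" for i
  proof -
    obtain p q r where pqr: "i = (p, q, r)" "p \<in> P" "q \<in> Q" "r \<in> R" using i by blast
    have "p \<in> D" "q \<in> D" "r \<in> D" using pqr P Q R by blast+
    then show ?thesis using J pqr(1) by simp
  qed
  fix z
  have "chi (Jac P Q R) z = (\<Sum>p\<in>P. \<Sum>q\<in>Q. \<Sum>r\<in>R. chi (Jac {p} {q} {r}) z)"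
    unfolding jac_chi[OF P Q R]
    apply (rule sum.cong[OF refl])
    apply (rule sum.cong[OF refl])
    apply (rule sum.cong[OF refl])
    subgoal for p q r using P Q R by (subst jac_single) auto
    done
  also have "\<dots> = (\<Sum>i\<in>P \<times> Q \<times> R. (\<lambda>(p, q, r). chi (Jac {p} {q} {r}) z) i)"
    by (simp add: sum.cartesian_product)
  finally show "chi (Jac P Q R) z = (\<Sum>i\<in>P \<times> Q \<times> R. chi ((\<lambda>(p, q, r). Jac {p} {q} {r}) i) z)"
    by (simp add: case_prod_beta)
qed

end

lemma ex3: "(x::3) = 0 \<or> x = 1 \<or> x = 2"
proof (cases x rule: bit1_cases)
  case (of_int z)
  then have "z < 3" by simp
  then have "z = 0 \<or> z = 1 \<or> z = 2" using of_int by arith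
  then show ?thesis using of_int by auto
qed
lemma all3: "(\<forall>x::3. P x) \<longleftrightarrow> P 0 \<and> P 1 \<and> P 2" using ex3 by metis
lemma all33: "(\<forall>x::3\<times>3. P x) \<longleftrightarrow> P (0,0) \<and> P (0,1) \<and> P (0,2) \<and> P (1,0) \<and> P (1,1) \<and> P (1,2) \<and> P (2,0) \<and> P (2,1) \<and> P (2,2)"
  by (simp only: split_paired_All all3) blast
lemma sum9: "(if p = (0::3,0::3) \<or> p = (2,2) \<or> p = (1,1) then 1 else 0) + (if p = (1,0) \<or> p = (0,2) \<or> p = (2,1) then 1 else 0) + (if p = (0,1) \<or> p = (2,0) \<or> p = (1,2) then 1 else (0::bit)) = 1"
proof -
  obtain a b where ab: "p = (a, b)" by (cases p)
  show ?thesis unfolding ab using ex3[of a] ex3[of b] by (elim disjE) simp_all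
qed
lemma n3: "(3::3) = 0" by simp
lemma n3s: "- (1::3) = 2" "- (2::3) = 1" "(2::3) + 2 = 1" "(1::3) + 2 = 0" "(2::3) + 1 = 0" "(1::3) + 1 = 2"
  "(0::3) - 1 = 2" "(0::3) - 2 = 1" "(1::3) - 2 = 2" "(2::3) - 1 = 1" "(1::3) - 1 = 0" "(2::3) - 2 = 0"
  by simp_all
lemma three3: "3 * (y::3) = 0" by (simp add: n3)
lemma three2: "(q::3\<times>3) + (q + q) = 0"
  by (cases q) (simp add: zero_prod_def three3)


lemma card2: "2 \<le> card A \<Longrightarrow> \<exists>u v. u \<in> A \<and> v \<in> A \<and> u \<noteq> v"
proof -
  assume c: "2 \<le> card A"
  then have f: "finite A" by (metis card.infinite not_numeral_le_zero)
  show ?thesis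
  proof (rule ccontr)
    assume "\<not> ?thesis"
    then have "\<forall>a\<in>A. \<forall>b\<in>A. a = b" by blast
    then have "card A \<le> Suc 0" using card_le_Suc0_iff_eq[OF f] by blast
    with c show False by simp
  qed
qed

lemma line_set: "{(a + t * c, b + t * d) | t::3. True} = {(a, b), (a + c, b + d), (a + 2 * c, b + 2 * d)}"
proof -
  have U: "(UNIV :: 3 set) = {0, 1, 2}" using ex3 by blast
  have "{(a + t * c, b + t * d) | t::3. True} = (\<lambda>t. (a + t * c, b + t * d)) ` UNIV" by blast
  then have "{(a + t * c, b + t * d) | t::3. True} = (\<lambda>t. (a + t * c, b + t * d)) ` {0, 1, 2}"
    unfolding U .
  then show ?thesis by simp
qed

lemma ag_iff: "ag23_line M \<longleftrightarrow> (\<exists>x y. x \<noteq> y \<and> M = {x, y, - x - y})"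
proof
  assume "ag23_line M"
  then obtain a b c d :: 3 where cd: "(c, d) \<noteq> (0, 0)" and M: "M = {(a + t * c, b + t * d) | t. True}"
    unfolding ag23_line_def by blast
  have M': "M = {(a, b), (a + c, b + d), (a + 2 * c, b + 2 * d)}" using M line_set by simp
  have e: "- (a, b) - (a + c, b + d) = (a + 2 * c, b + 2 * d)"
    using three3[of a] three3[of b] three3[of c] three3[of d] by (simp add: algebra_simps)
  have "(a, b) \<noteq> (a + c, b + d)" using cd by simp
  then show "\<exists>x y. x \<noteq> y \<and> M = {x, y, - x - y}" using M' e by metis
next
  assume "\<exists>x y. x \<noteq> y \<and> M = {x, y, - x - y}"
  then obtain x y :: "3 \<times> 3" where xy: "x \<noteq> y" and M: "M = {x, y, - x - y}" by blast
  obtain a b where x: "x = (a, b)" by (cases x)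
  obtain a' b' where y: "y = (a', b')" by (cases y)
  define c where "c = a' - a"
  define d where "d = b' - b"
  have cd: "(c, d) \<noteq> (0, 0)" using xy x y c_def d_def by auto
  have e1: "(a + c, b + d) = y" using y c_def d_def by simp
  have k: "u + 2 * (u' - u) = - u - u'" for u u' :: 3
  proof -
    have "u + 2 * (u' - u) - (- u - u') = 3 * u'" by (simp add: algebra_simps)
    then show ?thesis by (simp add: three3)
  qed
  have e2: "(a + 2 * c, b + 2 * d) = - x - y"
    unfolding x y c_def d_def using k by simp
  have "M = {(a + t * c, b + t * d) | t. True}" unfolding line_set M x[symmetric] e1 e2 ..
  then show "ag23_line M" unfolding ag23_line_def using cd by blast
qed

context tg
begin

lemma s_conj: "a \<in> D \<Longrightarrow> c \<in> D \<Longrightarrow> y \<in> D \<Longrightarrow> s (s c a) y = s c (s a (s c y))"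
  by (metis s_dist s_inv s_in)

definition Pt :: "'a \<Rightarrow> 'a \<Rightarrow> 'a \<Rightarrow> 3 \<times> 3 \<Rightarrow> 'a" where
  "Pt d e f p = (if p = (0,0) then d else if p = (1,0) then e else if p = (0,1) then f
     else if p = (2,0) then s d e else if p = (0,2) then s d f else if p = (2,2) then s e f
     else if p = (1,1) then s d (s e f) else if p = (2,1) then s e (s d f) else s f (s d e))"

lemma Pt_base:
  assumes d: "d \<in> D" and e: "e \<in> D" and f: "f \<in> D"
    and de: "s d e \<noteq> e" and ef: "s e f \<noteq> f" and df: "s d f \<noteq> f" and dx: "s d (s e f) \<noteq> s e f"
  shows "\<forall>p. s d (Pt d e f p) = Pt d e f (- p)"
    "\<forall>p. s e (Pt d e f p) = Pt d e f (- p - (1,0))"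
    "\<forall>p. s f (Pt d e f p) = Pt d e f (- p - (0,1))"
proof -
  have de': "s d e = s e d" using s_swap[OF d e de] .
  have df': "s d f = s f d" using s_swap[OF d f df] .
  have ef': "s e f = s f e" using s_swap[OF e f ef] .
  have sde: "s d e \<in> D" and sdf: "s d f \<in> D" and sef: "s e f \<in> D" using d e f by (auto intro: s_in)
  have "s (s e f) (s e (s d e)) = s e (s d e) \<longleftrightarrow> s f (s d e) = s d e" by (rule pres[OF f sde e])
  moreover have "s e (s d e) = d" using de' s_inv[OF e d] by simp
  moreover have "s (s e f) d \<noteq> d" using dx nc_sym[OF d sef] by simp
  ultimately have n1: "s f (s d e) \<noteq> s d e" by simp
  have "s (s f e) (s f (s d f)) = s f (s d f) \<longleftrightarrow> s e (s d f) = s d f" by (rule pres[OF e sdf f])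
  moreover have "s f (s d f) = d" using df' s_inv[OF f d] by simp
  moreover have "s (s f e) d \<noteq> d" using dx nc_sym[OF d sef] ef' by simp
  ultimately have n2: "s e (s d f) \<noteq> s d f" by simp
  have sw1: "s f (s d e) = s (s d e) f" using s_swap[OF f sde n1] .
  have sw2: "s e (s d f) = s (s d f) e" using s_swap[OF e sdf n2] .
  have sw3: "s d (s e f) = s (s e f) d" using s_swap[OF d sef dx] .
  have F3: "s e (s d e) = d" using de' s_inv[OF e d] by simp
  have F6: "s f (s d f) = d" using df' s_inv[OF f d] by simp
  have F7: "s f (s e f) = e" using ef' s_inv[OF f e] by simp
  have F1: "s d (s e (s d f)) = s f (s d e)"
    using s_dist[OF e sdf d] s_inv[OF d f] sw1 by simp
  have F2: "s d (s f (s d e)) = s e (s d f)"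
    using s_dist[OF f sde d] s_inv[OF d e] sw2 by simp
  have F4: "s e (s d (s e f)) = s f (s d e)"
    using s_dist[OF d sef e] s_inv[OF e f] de' sw1 by simp
  have F5: "s e (s f (s d e)) = s d (s e f)"
    using s_dist[OF f sde e] F3 sw3 by simp
  have F8: "s f (s d (s e f)) = s e (s d f)"
    using s_dist[OF d sef f] F7 df' sw2 by simp
  have F9: "s f (s e (s d f)) = s d (s e f)"
    using s_dist[OF e sdf f] F6 ef' sw3 by simp
  note facts = s_idem[OF d] s_idem[OF e] s_idem[OF f] s_inv[OF d e] s_inv[OF d f] s_inv[OF d sef]
    s_inv[OF e f] s_inv[OF e sdf] s_inv[OF f sde] F1 F2 F3 F4 F5 F6 F7 F8 F9
    de'[symmetric] df'[symmetric] ef'[symmetric]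
  show "\<forall>p. s d (Pt d e f p) = Pt d e f (- p)"
    unfolding all33 by (simp add: Pt_def facts)
  show "\<forall>p. s e (Pt d e f p) = Pt d e f (- p - (1,0))"
    unfolding all33 by (simp add: Pt_def facts)
  show "\<forall>p. s f (Pt d e f p) = Pt d e f (- p - (0,1))"
    unfolding all33 by (simp add: Pt_def facts)
qed


lemma arith1: "- (- (- p - q) - x) - q = - p - (- x - (q::3\<times>3))"
  by (simp add: algebra_simps three2)

lemma Pt_all:
  assumes d: "d \<in> D" and e: "e \<in> D" and f: "f \<in> D"
    and de: "s d e \<noteq> e" and ef: "s e f \<noteq> f" and df: "s d f \<noteq> f" and dx: "s d (s e f) \<noteq> s e f"
  shows "\<forall>p. Pt d e f p \<in> D"
    and "\<forall>x y. s (Pt d e f x) (Pt d e f y) = Pt d e f (- y - x)"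
    and "\<forall>x y. x \<noteq> y \<longrightarrow> s (Pt d e f x) (Pt d e f y) \<noteq> Pt d e f y"
    and "Pt d e f (0,0) = d" "Pt d e f (1,0) = e" "Pt d e f (0,1) = f"
proof -
  let ?P = "Pt d e f"
  show PD: "\<forall>p. ?P p \<in> D" unfolding all33 using d e f by (simp add: Pt_def s_in)
  have PDx: "\<And>p. ?P p \<in> D" using PD by blast
  note base = Pt_base[OF assms]
  define R where "R x \<longleftrightarrow> (\<forall>p. s (?P x) (?P p) = ?P (- p - x))" for x
  have step: "R (- x - q)" if Rq: "R q" and Rx: "R x" for q x
  proof -
    have eq: "?P (- x - q) = s (?P q) (?P x)" using Rq unfolding R_def by metis
    have "s (?P (- x - q)) (?P p) = ?P (- p - (- x - q))" for p
    proof -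
      have "s (?P (- x - q)) (?P p) = s (?P q) (s (?P x) (s (?P q) (?P p)))"
        unfolding eq by (rule s_conj[OF PDx PDx PDx])
      also have "\<dots> = ?P (- (- (- p - q) - x) - q)"
      proof -
        have Rq': "\<And>p. s (?P q) (?P p) = ?P (- p - q)" using Rq unfolding R_def by blast
        have Rx': "\<And>p. s (?P x) (?P p) = ?P (- p - x)" using Rx unfolding R_def by blast
        show ?thesis by (simp only: Rq' Rx')
      qed
      also have "\<dots> = ?P (- p - (- x - q))" by (simp only: arith1)
      finally show ?thesis .
    qed
    then show ?thesis unfolding R_def by blast
  qed
  have R00: "R (0,0)" using base(1) unfolding R_def by (simp add: Pt_def)
  have R10: "R (1,0)" using base(2) unfolding R_def by (simp add: Pt_def)
  have R01: "R (0,1)" using base(3) unfolding R_def by (simp add: Pt_def)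
  have R20: "R (2,0)" using step[OF R00 R10] by (simp add: n3s n3)
  have R02: "R (0,2)" using step[OF R00 R01] by (simp add: n3s n3)
  have R22: "R (2,2)" using step[OF R10 R01] by (simp add: n3s n3)
  have R11: "R (1,1)" using step[OF R00 R22] by (simp add: n3s n3)
  have R21: "R (2,1)" using step[OF R10 R02] by (simp add: n3s n3)
  have R12: "R (1,2)" using step[OF R01 R20] by (simp add: n3s n3)
  have Rall: "\<forall>x. R x" unfolding all33 using R00 R10 R01 R20 R02 R22 R11 R21 R12 by (simp add: n3s n3)
  then show tab: "\<forall>x y. s (?P x) (?P y) = ?P (- y - x)" unfolding R_def by blast
  have tab': "\<And>x y. s (?P x) (?P y) = ?P (- y - x)" using tab by blast
  define N where "N x y \<longleftrightarrow> s (?P x) (?P y) \<noteq> ?P y" for x y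
  have Nref: "N (- x - q) (- y - q)" if "N x y" for x y q
  proof -
    have "s (?P (- x - q)) (?P (- y - q)) = s (s (?P q) (?P x)) (s (?P q) (?P y))" by (simp only: tab')
    moreover have "?P (- y - q) = s (?P q) (?P y)" by (simp only: tab')
    ultimately show ?thesis using that pres[OF PDx[of x] PDx[of y] PDx[of q]] unfolding N_def by (simp add: n3s n3)
  qed
  have Ntr: "N (x + q) (y + q)" if "N x y" for x y q
    using Nref[OF Nref[OF that, of q], of 0] by (simp add: n3s n3 add.commute)
  have Nneg: "N (- x) (- y)" if "N x y" for x y
    using Nref[OF that, of 0] by (simp add: n3s n3)
  have N1: "N (0,0) (1,0)" using de unfolding N_def by (simp add: Pt_def)
  have N2: "N (0,0) (0,1)" using df unfolding N_def by (simp add: Pt_def)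
  have N3: "N (0,0) (2,2)" using dx unfolding N_def by (simp add: Pt_def)
  have N4: "N (1,0) (0,1)" using ef unfolding N_def by (simp add: Pt_def)
  have N5: "N (0,0) (2,1)" using Ntr[OF N4, of "(2,0)"] by (simp add: n3s n3)
  have N6: "N (0,0) (2,0)" using Nneg[OF N1] by (simp add: n3s n3)
  have N7: "N (0,0) (0,2)" using Nneg[OF N2] by (simp add: n3s n3)
  have N8: "N (0,0) (1,1)" using Nneg[OF N3] by (simp add: n3s n3)
  have N9: "N (0,0) (1,2)" using Nneg[OF N5] by (simp add: n3s n3)
  have N0: "\<forall>v. v \<noteq> (0,0) \<longrightarrow> N (0,0) v" unfolding all33 using N1 N2 N3 N5 N6 N7 N8 N9 by (simp add: n3s n3)
  show "\<forall>x y. x \<noteq> y \<longrightarrow> s (?P x) (?P y) \<noteq> ?P y"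
  proof (intro allI impI)
    fix x y :: "3 \<times> 3" assume xy: "x \<noteq> y"
    have "y - x \<noteq> (0,0)" using xy by (simp add: zero_prod_def[symmetric])
    then have "N (0,0) (y - x)" using N0 by blast
    then have "N ((0,0) + x) ((y - x) + x)" by (rule Ntr)
    then show "s (?P x) (?P y) \<noteq> ?P y" unfolding N_def by (simp add: zero_prod_def[symmetric])
  qed
  show "?P (0,0) = d" "?P (1,0) = e" "?P (0,1) = f" by (simp_all add: Pt_def)
qed


lemma bit_add_self2: "x + (x + y) = (y::bit)"
  by (simp add: add.assoc[symmetric])

definition cb :: "'a \<Rightarrow> 'a \<Rightarrow> 'a \<Rightarrow> bit" where "cb p q z = chi (B p q) z"

lemma cb_sym: "p \<in> D \<Longrightarrow> q \<in> D \<Longrightarrow> cb p q z = cb q p z"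
  unfolding cb_def using B_sym by simp

lemma cb_c: "s p q = q \<Longrightarrow> cb p q z = 0"
  unfolding cb_def by (simp add: B_c chi_def)

lemma mB:
  assumes p: "p \<in> D" and q: "q \<in> D" and r: "r \<in> D"
  shows "chi (algA_mult G {p} (B q r)) z = (if s q r = r then 0 else cb p q z + cb p r z + cb p (s r q) z)"
proof (cases "s q r = r")
  case True
  then have "B q r = {}" by (rule B_c)
  then show ?thesis using mult_single[of "{}" p z] p True by simp
next
  case False
  have sub: "B q r \<subseteq> D" using B_sub[OF q r] .
  have "chi (algA_mult G {p} (B q r)) z = (\<Sum>y\<in>B q r. chi (B p y) z)"
    by (rule mult_single[OF B_fin sub p])
  also have "\<dots> = cb p q z + cb p r z + cb p (s r q) z"
    unfolding cb_def by (rule B_nc[OF q r False])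
  finally show ?thesis using False by simp
qed

lemma jt_eq:
  assumes d: "d \<in> D" and e: "e \<in> D" and f: "f \<in> D"
  shows "jt d e f z = (if s e f = f then 0 else cb d e z + cb d f z + cb d (s f e) z)
     + (if s f d = d then 0 else cb e f z + cb e d z + cb e (s d f) z)
     + (if s d e = e then 0 else cb f d z + cb f e z + cb f (s e d) z)"
  unfolding jt_def using mB[OF d e f] mB[OF e f d] mB[OF f d e] by simp

lemma jt_allnc:
  assumes d: "d \<in> D" and e: "e \<in> D" and f: "f \<in> D"
    and de: "s d e \<noteq> e" and ef: "s e f \<noteq> f" and fd: "s f d \<noteq> d"
  shows "jt d e f z = cb d (s f e) z + cb e (s d f) z + cb f (s e d) z"
proof -
  have "jt d e f z = (cb d e z + cb d f z + cb d (s f e) z) + (cb e f z + cb e d z + cb e (s d f) z)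
     + (cb f d z + cb f e z + cb f (s e d) z)"
    using jt_eq[OF d e f] de ef fd by simp
  also have "\<dots> = cb d (s f e) z + cb e (s d f) z + cb f (s e d) z"
    using cb_sym[OF d e] cb_sym[OF e f] cb_sym[OF f d]
    by (simp add: ac_simps bit_add_self2)
  finally show ?thesis .
qed

definition tableg :: "(3 \<times> 3 \<Rightarrow> 'a) \<Rightarrow> bool" where
  "tableg g \<longleftrightarrow> (\<forall>x. g x \<in> D) \<and> (\<forall>x y. s (g x) (g y) = g (- y - x)) \<and>
     (\<forall>x y. x \<noteq> y \<longrightarrow> s (g x) (g y) \<noteq> g y)"

lemma tg_D: "tableg g \<Longrightarrow> g x \<in> D" unfolding tableg_def by blast
lemma tg_s: "tableg g \<Longrightarrow> s (g x) (g y) = g (- y - x)" unfolding tableg_def by blast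
lemma tg_n: "tableg g \<Longrightarrow> x \<noteq> y \<Longrightarrow> s (g x) (g y) \<noteq> g y" unfolding tableg_def by blast
lemma tg_inj: "tableg g \<Longrightarrow> g x = g y \<longleftrightarrow> x = y"
  by (metis tg_n tg_D s_idem)

lemma tg_cb: "tableg g \<Longrightarrow> x \<noteq> y \<Longrightarrow> cb (g x) (g y) z = chi {g x, g y, g (- x - y)} z"
  unfolding cb_def B_def using tg_n[of g x y] tg_s[of g y x] by simp

lemma jt_plane:
  assumes T: "tableg g"
  shows "jt (g (0,0)) (g (1,0)) (g (0,1)) z = chi (range g) z"
proof -
  note inj = tg_inj[OF T]
  have ne: "(0::3,0::3) \<noteq> (1,0)" "(1::3,0::3) \<noteq> (0,1)" "(0::3,1::3) \<noteq> (0,0)" by simp_all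
  have "jt (g (0,0)) (g (1,0)) (g (0,1)) z =
    cb (g (0,0)) (s (g (0,1)) (g (1,0))) z + cb (g (1,0)) (s (g (0,0)) (g (0,1))) z
      + cb (g (0,1)) (s (g (1,0)) (g (0,0))) z"
    by (rule jt_allnc) (use T tg_D tg_n ne in auto)
  also have "\<dots> = cb (g (0,0)) (g (2,2)) z + cb (g (1,0)) (g (0,2)) z + cb (g (0,1)) (g (2,0)) z"
    using tg_s[OF T] by (simp add: n3s n3)
  also have "\<dots> = chi {g (0,0), g (2,2), g (1,1)} z + chi {g (1,0), g (0,2), g (2,1)} z
      + chi {g (0,1), g (2,0), g (1,2)} z"
    using tg_cb[OF T] by (simp add: n3s n3)
  also have "\<dots> = chi (range g) z"
  proof (cases "z \<in> range g")
    case True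
    then obtain p where z: "z = g p" by blast
    have c3: "chi {g a, g b, g c} (g p) = (if p = a \<or> p = b \<or> p = c then 1 else 0)" for a b c p
      by (simp add: chi_def inj)
    have cr: "chi (range g) (g p) = 1" for p by (simp add: chi_def)
    have "chi {g (0,0), g (2,2), g (1,1)} (g p) + chi {g (1,0), g (0,2), g (2,1)} (g p)
      + chi {g (0,1), g (2,0), g (1,2)} (g p) = 1"
      unfolding c3 by (rule sum9)
    then show ?thesis unfolding z cr .
  next
    case False
    have nz: "\<And>x. z \<noteq> g x" using False by blast
    have c0: "chi {g a, g b, g c} z = 0" for a b c by (simp add: chi_def nz)
    have cr0: "chi (range g) z = 0" using False by (simp add: chi_def)
    show ?thesis unfolding c0 cr0 by simp
  qed
  finally show ?thesis .
qed

lemma fl_iff: "fischer_line G D L \<longleftrightarrow> (\<exists>d\<in>D. \<exists>e\<in>D. s d e \<noteq> e \<and> L = {d, e, s e d})"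
  unfolding fischer_line_def using commutes_iff conjg_eq by auto

lemma line_pair:
  assumes d: "d \<in> D" and e: "e \<in> D" and n: "s d e \<noteq> e" and L: "L = {d, e, s e d}"
    and u: "u \<in> L" and v: "v \<in> L" and uv: "u \<noteq> v"
  shows "u \<in> D" "v \<in> D" "s u v \<noteq> v" "L = {u, v, s v u}" "s u v = s v u"
proof -
  note l = line3[OF d e n]
  have x: "s e d \<in> D" using s_in[OF e d] .
  show "u \<in> D" "v \<in> D" using u v L d e x by auto
  define x where "x = s e d"
  have l1: "s d e = x" "s e d = x" "s d x = e" "s e x = d" "s x d = e" "s x e = d"
    using l unfolding x_def by auto
  have n1: "d \<noteq> e" "x \<noteq> d" "x \<noteq> e" using l unfolding x_def by auto
  define Q where "Q a b \<longleftrightarrow> s a b \<noteq> b \<and> L = {a, b, s b a} \<and> s a b = s b a" for a b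
  have Q1: "Q d e" "Q e d" "Q d x" "Q x d" "Q e x" "Q x e"
    unfolding Q_def L x_def[symmetric] using l1 n1 by (auto simp: insert_commute)
  have uu: "u = d \<or> u = e \<or> u = x" "v = d \<or> v = e \<or> v = x" using u v L x_def by auto
  have all: "Q u v" using uu uv Q1 by auto
  then show "s u v \<noteq> v" "L = {u, v, s v u}" "s u v = s v u" unfolding Q_def by auto
qed


lemma sub_close:
  assumes T: "fischer_subspace G D T" and u: "u \<in> T" "u \<in> D" and v: "v \<in> T" "v \<in> D"
    and n: "s u v \<noteq> v"
  shows "s v u \<in> T"
proof -
  define L where "L = {u, v, s v u}"
  have fl: "fischer_line G D L" unfolding fl_iff L_def using u v n by blast
  have uv: "u \<noteq> v" using n s_idem[OF u(2)] by auto
  have "{u, v} \<subseteq> L \<inter> T" using u v unfolding L_def by blast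
  moreover have "finite (L \<inter> T)" unfolding L_def by simp
  ultimately have "card {u, v} \<le> card (L \<inter> T)" by (rule card_mono[rotated])
  then have "2 \<le> card (L \<inter> T)" using uv by simp
  then have "L \<subseteq> T" using T fl unfolding fischer_subspace_def by blast
  then show ?thesis unfolding L_def by blast
qed

lemma range_sub:
  assumes T: "tableg g"
  shows "fischer_subspace G D (range g)"
  unfolding fischer_subspace_def
proof (intro conjI allI impI)
  show "range g \<subseteq> D" using tg_D[OF T] by blast
  fix L assume h: "fischer_line G D L \<and> 2 \<le> card (L \<inter> range g)"
  then obtain d e where d: "d \<in> D" and e: "e \<in> D" and n: "s d e \<noteq> e" and L: "L = {d, e, s e d}"
    unfolding fl_iff by blast
  obtain u v where uv: "u \<in> L \<inter> range g" "v \<in> L \<inter> range g" "u \<noteq> v" using card2 h by blast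
  obtain x where x: "u = g x" using uv by blast
  obtain y where y: "v = g y" using uv by blast
  have L2: "L = {u, v, s v u}" using line_pair[OF d e n L] uv by blast
  have "s v u = g (- x - y)" unfolding x y using tg_s[OF T] by simp
  then show "L \<subseteq> range g" unfolding L2 using x y by blast
qed

lemma span_range:
  assumes T: "tableg g"
  shows "fischer_span G D ({g (0,0), g (1,0), g (2,0)} \<union> {g (0,0), g (0,1), g (0,2)}) = range g"
proof
  let ?A = "{g (0,0), g (1,0), g (2,0)} \<union> {g (0,0), g (0,1), g (0,2)}"
  show "fischer_span G D ?A \<subseteq> range g"
    unfolding fischer_span_def using range_sub[OF T] by blast
  show "range g \<subseteq> fischer_span G D ?A"
  proof
    fix z assume "z \<in> range g"
    then obtain p where z: "z = g p" by blast
    show "z \<in> fischer_span G D ?A"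
      unfolding fischer_span_def
    proof (intro CollectI allI impI)
      fix S assume S: "fischer_subspace G D S \<and> ?A \<subseteq> S"
      have cl: "g (- x - y) \<in> S" if "g x \<in> S" "g y \<in> S" "x \<noteq> y" for x y
      proof -
        have "s (g y) (g x) \<in> S"
          by (rule sub_close) (use S that tg_D[OF T] tg_n[OF T] in auto)
        then show ?thesis using tg_s[OF T] by simp
      qed
      have s00: "g (0,0) \<in> S" and s10: "g (1,0) \<in> S" and s20: "g (2,0) \<in> S"
        and s01: "g (0,1) \<in> S" and s02: "g (0,2) \<in> S" using S by auto
      have s22: "g (2,2) \<in> S" using cl[OF s10 s01] by (simp add: n3s n3)
      have s11: "g (1,1) \<in> S" using cl[OF s00 s22] by (simp add: n3s n3)
      have s21: "g (2,1) \<in> S" using cl[OF s10 s02] by (simp add: n3s n3)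
      have s12: "g (1,2) \<in> S" using cl[OF s01 s20] by (simp add: n3s n3)
      have "\<forall>p. g p \<in> S" unfolding all33 using s00 s10 s20 s01 s02 s22 s11 s21 s12 by blast
      then show "z \<in> S" using z by blast
    qed
  qed
qed

lemma fl_g:
  assumes T: "tableg g"
  shows "fischer_line G D (g ` M) \<longleftrightarrow> (\<exists>x y. x \<noteq> y \<and> M = {x, y, - x - y})"
proof
  assume "fischer_line G D (g ` M)"
  then obtain d e where d: "d \<in> D" and e: "e \<in> D" and n: "s d e \<noteq> e" and L: "g ` M = {d, e, s e d}"
    unfolding fl_iff by blast
  have "d \<in> g ` M" "e \<in> g ` M" using L by auto
  then obtain x y where x: "x \<in> M" "d = g x" and y: "y \<in> M" "e = g y" by blast
  have xy: "x \<noteq> y" using n x y s_idem[OF d] by auto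
  have "s e d = g (- x - y)" using x y tg_s[OF T] by (simp add: algebra_simps)
  then have "g ` M = g ` {x, y, - x - y}" using L x y by simp
  moreover have ig: "inj g" using tg_inj[OF T] by (simp add: inj_def)
  ultimately have "M = {x, y, - x - y}" by (simp only: inj_image_eq_iff[OF ig])
  then show "\<exists>x y. x \<noteq> y \<and> M = {x, y, - x - y}" using xy by blast
next
  assume "\<exists>x y. x \<noteq> y \<and> M = {x, y, - x - y}"
  then obtain x y where xy: "x \<noteq> y" and M: "M = {x, y, - x - y}" by blast
  have "g ` M = {g x, g y, s (g y) (g x)}" using M tg_s[OF T] by (simp add: algebra_simps)
  then show "fischer_line G D (g ` M)" unfolding fl_iff using tg_D[OF T] tg_n[OF T xy] by blast
qed

lemma plane_range:
  assumes T: "tableg g"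
  shows "fischer_affine_plane G D (range g)"
proof -
  let ?L1 = "{g (0,0), g (1,0), g (2,0)}" and ?L2 = "{g (0,0), g (0,1), g (0,2)}"
  note inj = tg_inj[OF T]
  have l1: "?L1 = g ` {(0,0), (1,0), - (0,0) - (1,0)}" by (simp add: n3s n3)
  have l2: "?L2 = g ` {(0,0), (0,1), - (0,0) - (0,1)}" by (simp add: n3s n3)
  have f1: "fischer_line G D ?L1" unfolding l1 fl_g[OF T] by (intro exI[of _ "(0,0)"] exI[of _ "(1,0)"]) simp
  have f2: "fischer_line G D ?L2" unfolding l2 fl_g[OF T] by (intro exI[of _ "(0,0)"] exI[of _ "(0,1)"]) simp
  have ne: "?L1 \<noteq> ?L2"
  proof
    assume "?L1 = ?L2"
    then have "g (0,1) \<in> ?L1" by simp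
    then show False by (simp add: inj)
  qed
  have int: "?L1 \<inter> ?L2 \<noteq> {}" by blast
  have ig: "inj g" using inj by (simp add: inj_def)
  have bij: "bij_betw (inv_into UNIV g) (range g) UNIV"
    using bij_betw_inv_into[OF inj_on_imp_bij_betw[OF ig]] by simp
  have iso: "iso_AG23 G D (range g)"
    unfolding iso_AG23_def
  proof (intro exI[of _ "inv_into UNIV g"] conjI allI impI)
    show "bij_betw (inv_into UNIV g) (range g) UNIV" by (rule bij)
    fix L assume L: "L \<subseteq> range g"
    have LM: "L = g ` (inv_into UNIV g ` L)"
    proof -
      have "g ` (inv_into UNIV g ` L) = (g \<circ> inv_into UNIV g) ` L" by (simp add: image_comp)
      also have "\<dots> = (\<lambda>y. y) ` L"
      proof (rule image_cong[OF refl])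
        fix y assume "y \<in> L"
        then have "y \<in> range g" using L by blast
        then show "(g \<circ> inv_into UNIV g) y = y" by (simp add: f_inv_into_f)
      qed
      also have "\<dots> = L" by simp
      finally show ?thesis by simp
    qed
    show "fischer_line G D L \<longleftrightarrow> ag23_line (inv_into UNIV g ` L)"
      by (subst LM) (simp only: fl_g[OF T] ag_iff)
  qed
  show ?thesis unfolding fischer_affine_plane_def
    using f1 f2 ne int span_range[OF T, symmetric] iso by blast
qed


lemma chi3: "a \<noteq> b \<Longrightarrow> a \<noteq> c \<Longrightarrow> b \<noteq> c \<Longrightarrow> chi {a, b, c} z = chi {a} z + chi {b} z + chi {c} z"
  unfolding chi_def by auto

lemma cb_nc: "p \<in> D \<Longrightarrow> q \<in> D \<Longrightarrow> s p q \<noteq> q \<Longrightarrow> cb p q z = chi {p} z + chi {q} z + chi {s q p} z"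
  unfolding cb_def B_def using line3[of p q] by (simp add: chi3)

lemma one_nc:
  assumes p: "p \<in> D" and q: "q \<in> D" and r: "r \<in> D" and pq: "s p q = q" and pr: "s p r = r"
  shows "cb p q z = 0" "cb p r z = 0" "cb p (s r q) z = 0"
proof -
  show "cb p q z = 0" using cb_c[OF pq] .
  show "cb p r z = 0" using cb_c[OF pr] .
  have "s p (s r q) = s (s p r) (s p q)" by (rule s_dist[OF r q p])
  then have "s p (s r q) = s r q" using pq pr by simp
  then show "cb p (s r q) z = 0" by (rule cb_c)
qed

lemma two_nc:
  assumes a: "a \<in> D" and b: "b \<in> D" and c: "c \<in> D"
    and ac: "s a c = c" and ab: "s a b \<noteq> b" and bc: "s b c \<noteq> c"
  shows "cb a b z + cb a (s c b) z + cb c b z + cb c (s b a) z = 0"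
proof -
  have sbc: "s b c = s c b" using s_swap[OF b c bc] .
  have sab: "s a b = s b a" using s_swap[OF a b ab] .
  have ca: "s c a = a" using ac nc_sym[OF a c] by simp
  have cb': "s c b \<noteq> b" using bc nc_sym[OF b c] by simp
  have ba: "s b a \<noteq> a" using ab nc_sym[OF a b] by simp
  have cbD: "s c b \<in> D" and baD: "s b a \<in> D" using s_in b c a by auto
  have n1: "s a (s c b) \<noteq> s c b"
  proof
    assume "s a (s c b) = s c b"
    then have "s a (s b c) = s b c" using sbc by simp
    then have "s a b = b" using s_ax7[OF a b c bc ac] by simp
    with ab show False by simp
  qed
  have n2: "s c (s b a) \<noteq> s b a"
  proof
    assume "s c (s b a) = s b a"
    then have "s c b = b" using s_ax7[OF c b a ba ca] by simp
    with cb' show False by simp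
  qed
  have X1: "s (s c b) a = s a (s c b)" using s_swap[OF a cbD n1] by simp
  have X2: "s (s b a) c = s c (s b a)" using s_swap[OF c baD n2] by simp
  have X3: "s c (s b a) = s a (s c b)"
    using s_dist[OF a b c] sab ca by simp
  have "cb a b z + cb a (s c b) z + cb c b z + cb c (s b a) z =
     (chi {a} z + chi {b} z + chi {s b a} z) + (chi {a} z + chi {s c b} z + chi {s (s c b) a} z)
     + (chi {c} z + chi {b} z + chi {s b c} z) + (chi {c} z + chi {s b a} z + chi {s (s b a) c} z)"
    using cb_nc[OF a b ab] cb_nc[OF a cbD n1] cb_nc[OF c b cb'] cb_nc[OF c baD n2] by simp
  also have "\<dots> = 0" unfolding X1 X2 X3 sbc by (simp add: ac_simps bit_add_self2)
  finally show ?thesis .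
qed

lemma jt_zero:
  assumes d: "d \<in> D" and e: "e \<in> D" and f: "f \<in> D"
    and no: "\<not> (s d e \<noteq> e \<and> s e f \<noteq> f \<and> s f d \<noteq> d \<and> s d (s f e) \<noteq> s f e)"
  shows "jt d e f z = 0"
proof -
  note J = jt_eq[OF d e f, of z]
  have sym: "\<And>a b. a \<in> D \<Longrightarrow> b \<in> D \<Longrightarrow> s a b = b \<longleftrightarrow> s b a = a" using nc_sym by blast
  show ?thesis
  proof (cases "s d e = e")
    case de: True
    show ?thesis
    proof (cases "s e f = f")
      case ef: True
      show ?thesis
      proof (cases "s f d = d")
        case True then show ?thesis using J de ef by simp
      next
        case fd: False
        have "s e d = d" using de sym[OF d e] by simp
        then have z: "cb e f z = 0" "cb e d z = 0" "cb e (s d f) z = 0" using one_nc[OF e f d ef] by auto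
        show ?thesis using J de ef fd z by simp
      qed
    next
      case ef: False
      show ?thesis
      proof (cases "s f d = d")
        case fd: True
        have "s d f = f" using fd sym[OF d f] by simp
        then have z: "cb d e z = 0" "cb d f z = 0" "cb d (s f e) z = 0" using one_nc[OF d e f de] by auto
        show ?thesis using J de ef fd z by simp
      next
        case fd: False
        have df: "s d f \<noteq> f" using fd sym[OF d f] by simp
        have z1: "cb d e z = 0" "cb e d z = 0" using de sym[OF d e] by (auto intro: cb_c)
        have sfe: "s f e = s e f" using s_swap[OF e f ef] by simp
        have sdf: "s d f = s f d" using s_swap[OF d f df] .
        have t: "cb d f z + cb d (s e f) z + cb e f z + cb e (s f d) z = 0"
          by (rule two_nc[OF d f e]) (use de ef df sym[OF e f] in auto)
        have "jt d e f z = cb d f z + cb d (s f e) z + cb e f z + cb e (s d f) z"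
          using J de ef fd z1 by (simp add: ac_simps bit_add_self2 cb_sym[OF e d])
        then show ?thesis using t sfe sdf by simp
      qed
    qed
  next
    case de: False
    show ?thesis
    proof (cases "s e f = f")
      case ef: True
      show ?thesis
      proof (cases "s f d = d")
        case fd: True
        have "s f e = e" using ef sym[OF e f] by simp
        then have z: "cb f d z = 0" "cb f e z = 0" "cb f (s e d) z = 0" using one_nc[OF f d e fd] by auto
        show ?thesis using J de ef fd z by simp
      next
        case fd: False
        have z1: "cb e f z = 0" "cb f e z = 0" using ef sym[OF e f] by (auto intro: cb_c)
        have ed: "s e d \<noteq> d" using de sym[OF d e] by simp
        have sdf: "s d f = s f d" using s_swap[OF f d fd] by simp
        have sed: "s e d = s d e" using s_swap[OF d e de] by simp
        have t: "cb e d z + cb e (s f d) z + cb f d z + cb f (s d e) z = 0"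
          by (rule two_nc[OF e d f]) (use ef ed fd nc_sym[OF d f] in auto)
        have "jt d e f z = cb e d z + cb e (s d f) z + cb f d z + cb f (s e d) z"
          using J de ef fd z1 by (simp add: ac_simps bit_add_self2)
        then show ?thesis using t sdf sed by simp
      qed
    next
      case ef: False
      show ?thesis
      proof (cases "s f d = d")
        case fd: True
        have df: "s d f = f" using fd sym[OF d f] by simp
        have z1: "cb d f z = 0" "cb f d z = 0" using fd df by (auto intro: cb_c)
        have t: "cb d e z + cb d (s f e) z + cb f e z + cb f (s e d) z = 0"
          by (rule two_nc[OF d e f df de ef])
        have "jt d e f z = cb d e z + cb d (s f e) z + cb f e z + cb f (s e d) z"
          using J de ef fd z1 by (simp add: ac_simps bit_add_self2 cb_sym[OF e f])
        then show ?thesis using t by simp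
      next
        case fd: False
        have c: "s d (s f e) = s f e" using no de ef fd by blast
        have sfe: "s f e = s e f" using s_swap[OF e f ef] by simp
        have sdf: "s d f = s f d" using s_swap[OF d f] fd sym[OF d f] by auto
        have sfeD: "s f e \<in> D" and sdfD: "s d f \<in> D" and sedD: "s e d \<in> D" using s_in d e f by auto
        have c2: "s e (s d f) = s d f"
        proof -
          have "s (s f e) (s f (s d f)) = s f (s d f) \<longleftrightarrow> s e (s d f) = s d f" by (rule pres[OF e sdfD f])
          moreover have "s f (s d f) = d" using sdf s_inv[OF f d] by simp
          moreover have "s (s f e) d = d" using c nc_sym[OF d sfeD] by simp
          ultimately show ?thesis by simp
        qed
        have c3: "s f (s e d) = s e d"
        proof -
          have "s (s e f) (s e (s e d)) = s e (s e d) \<longleftrightarrow> s f (s e d) = s e d" by (rule pres[OF f sedD e])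
          moreover have "s e (s e d) = d" using s_inv[OF e d] .
          moreover have "s (s e f) d = d" using c nc_sym[OF d sfeD] sfe by simp
          ultimately show ?thesis by simp
        qed
        have "jt d e f z = cb d (s f e) z + cb e (s d f) z + cb f (s e d) z"
          by (rule jt_allnc[OF d e f de ef fd])
        then show ?thesis using cb_c[OF c] cb_c[OF c2] cb_c[OF c3] by simp
      qed
    qed
  qed
qed

lemma jac_single_van:
  assumes H: "\<forall>S. fischer_affine_plane G D S \<longrightarrow> vanishing G D S"
    and d: "d \<in> D" and e: "e \<in> D" and f: "f \<in> D"
  shows "vanishing G D (Jac {d} {e} {f})"
proof (cases "s d e \<noteq> e \<and> s e f \<noteq> f \<and> s f d \<noteq> d \<and> s d (s f e) \<noteq> s f e")
  case True
  then have de: "s d e \<noteq> e" and ef: "s e f \<noteq> f" and fd: "s f d \<noteq> d" and dx0: "s d (s f e) \<noteq> s f e" by auto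
  have df: "s d f \<noteq> f" using fd nc_sym[OF d f] by simp
  have dx: "s d (s e f) \<noteq> s e f" using dx0 s_swap[OF e f ef] by simp
  note PA = Pt_all[OF d e f de ef df dx]
  have T: "tableg (Pt d e f)" unfolding tableg_def using PA(1,2,3) by blast
  have "chi (Jac {d} {e} {f}) z = chi (range (Pt d e f)) z" for z
    using jac_single[OF d e f, of z] jt_plane[OF T, of z] PA(4,5,6) by simp
  then have "Jac {d} {e} {f} = range (Pt d e f)" by (simp add: set_eq_chi)
  then show ?thesis using H plane_range[OF T] by simp
next
  case False
  have "chi (Jac {d} {e} {f}) z = 0" for z
    using jac_single[OF d e f, of z] jt_zero[OF d e f False] by simp
  then have "Jac {d} {e} {f} = {}" by (metis chi_def one_neq_zero ex_in_conv)
  then show ?thesis by (simp add: vanishing_def algA_def)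
qed


lemma D_subspace: "fischer_subspace G D D"
  unfolding fischer_subspace_def fl_iff using s_in by blast

lemma span_D: "L1 \<union> L2 \<subseteq> D \<Longrightarrow> fischer_span G D (L1 \<union> L2) \<subseteq> D"
  unfolding fischer_span_def using D_subspace by blast

lemma line_D: "fischer_line G D L \<Longrightarrow> L \<subseteq> D"
  unfolding fl_iff using s_in by blast

lemma plane_table:
  assumes P: "fischer_affine_plane G D S"
  shows "\<exists>g. tableg g \<and> range g = S"
proof -
  obtain L1 L2 where l1: "fischer_line G D L1" and l2: "fischer_line G D L2"
    and S: "S = fischer_span G D (L1 \<union> L2)" and iso: "iso_AG23 G D S"
    using P unfolding fischer_affine_plane_def by blast
  have SD: "S \<subseteq> D" unfolding S using span_D line_D[OF l1] line_D[OF l2] by blast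
  obtain f :: "'a \<Rightarrow> 3 \<times> 3" where bf: "bij_betw f S UNIV"
    and lf: "\<And>L. L \<subseteq> S \<Longrightarrow> fischer_line G D L \<longleftrightarrow> ag23_line (f ` L)"
    using iso unfolding iso_AG23_def by blast
  define g where "g = inv_into S f"
  have bg: "bij_betw g UNIV S" unfolding g_def by (rule bij_betw_inv_into[OF bf])
  have gS: "g x \<in> S" for x using bg by (auto simp: bij_betw_def)
  have gD: "g x \<in> D" for x using gS SD by blast
  have fg: "f (g x) = x" for x
    unfolding g_def using bf by (simp add: bij_betw_def f_inv_into_f)
  have ginj: "g x = g y \<longleftrightarrow> x = y" for x y using fg by metis
  have rg: "range g = S" using bg by (simp add: bij_betw_def)
  have key: "s (g x) (g y) \<noteq> g y \<and> s (g x) (g y) = g (- x - y)" if xy: "x \<noteq> y" for x y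
  proof -
    define M where "M = {x, y, - x - y}"
    have agM: "ag23_line M" unfolding ag_iff M_def using xy by blast
    have LS: "g ` M \<subseteq> S" using gS by blast
    have "f ` (g ` M) = M" by (simp add: image_comp fg o_def)
    then have flL: "fischer_line G D (g ` M)" using lf[OF LS] agM by simp
    then obtain d e where d: "d \<in> D" and e: "e \<in> D" and n: "s d e \<noteq> e" and L: "g ` M = {d, e, s e d}"
      unfolding fl_iff by blast
    have u: "g x \<in> g ` M" and v: "g y \<in> g ` M" unfolding M_def by auto
    have uv: "g x \<noteq> g y" using xy ginj by simp
    note lp = line_pair[OF d e n L u v uv]
    note l3 = line3[OF lp(1) lp(2) lp(3)]
    have "s (g y) (g x) \<in> g ` M" using lp(4) by blast
    then have "s (g y) (g x) = g (- x - y)" using l3(2) l3(3) unfolding M_def by auto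
    then show ?thesis using lp(3) lp(5) by simp
  qed
  have T: "tableg g"
    unfolding tableg_def
  proof (intro conjI allI impI)
    show "g x \<in> D" for x by (rule gD)
    show "s (g x) (g y) \<noteq> g y" if "x \<noteq> y" for x y using key[OF that] by blast
    show "s (g x) (g y) = g (- y - x)" for x y
    proof (cases "x = y")
      case True
      have k2: "- (u::3) - u = u" for u
      proof -
        have "- u - u - u = - (3 * u)" by (simp add: algebra_simps)
        then have "- u - u - u = 0" by (simp add: three3)
        then show ?thesis by simp
      qed
      obtain a b where x: "x = (a, b)" by (cases x)
      have "- x - x = x" unfolding x using k2 by simp
      then show ?thesis using True s_idem[OF gD[of x]] by simp
    next
      case False
      have e: "- x - y = - y - x" by (simp add: algebra_simps)
      have "s (g x) (g y) = g (- x - y)" using key[OF False] by blast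
      then show ?thesis unfolding e .
    qed
  qed
  show ?thesis using T rg by blast
qed

lemma vanishing_empty: "vanishing G D {}"
  by (simp add: vanishing_def algA_def)

end

lemma (in group) tg_intro:
  fixes D :: "'a set"
  assumes d0: "d0 \<in> carrier G"
    and DD: "D = {g \<otimes>\<^bsub>G\<^esub> d0 \<otimes>\<^bsub>G\<^esub> inv\<^bsub>G\<^esub> g | g. g \<in> carrier G}"
    and inv: "\<forall>d\<in>D. d \<noteq> \<one>\<^bsub>G\<^esub> \<and> d \<otimes>\<^bsub>G\<^esub> d = \<one>\<^bsub>G\<^esub>"
    and ord: "\<forall>d\<in>D. \<forall>e\<in>D. group.ord G (d \<otimes>\<^bsub>G\<^esub> e) \<in> {1, 2, 3}"
  shows "tg G D"
proof -
  have DG: "D \<subseteq> carrier G" unfolding DD using d0 by auto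
  have invo: "d \<in> D \<Longrightarrow> d \<otimes> d = \<one>" for d using inv by blast
  have invD: "d \<in> D \<Longrightarrow> inv d = d" for d using invo[of d] DG inv_equality[of d d] by blast
  have clo: "a \<otimes> b \<otimes> a \<in> D" if a: "a \<in> D" and b: "b \<in> D" for a b
  proof -
    obtain k where k: "k \<in> carrier G" "b = k \<otimes> d0 \<otimes> inv k" using b unfolding DD by blast
    have ac: "a \<in> carrier G" using a DG by blast
    have "a \<otimes> b \<otimes> a = (a \<otimes> k) \<otimes> d0 \<otimes> inv (a \<otimes> k)"
      using k ac d0 invD[OF a] by (simp add: inv_mult_group m_assoc)
    moreover have "a \<otimes> k \<in> carrier G" using ac k by simp
    ultimately show ?thesis unfolding DD by blast
  qed
  have tri: "a \<otimes> b \<otimes> a = b \<otimes> a \<otimes> b" if a: "a \<in> D" and b: "b \<in> D" and n: "a \<otimes> b \<noteq> b \<otimes> a" for a b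
  proof -
    have ac: "a \<in> carrier G" and bc: "b \<in> carrier G" using a b DG by auto
    have abc: "a \<otimes> b \<in> carrier G" using ac bc by simp
    have o: "(a \<otimes> b) [^] ord (a \<otimes> b) = \<one>" using pow_ord_eq_1[OF abc] .
    have "ord (a \<otimes> b) \<in> {1, 2, 3}" using ord a b by blast
    moreover have "ord (a \<otimes> b) \<noteq> 1"
    proof
      assume "ord (a \<otimes> b) = 1"
      then have "a \<otimes> b = \<one>" using o abc by simp
      then have "a \<otimes> b = a \<otimes> a" using invo[OF a] by simp
      then have "b = a" using ac bc l_cancel by blast
      then show False using n by simp
    qed
    moreover have "ord (a \<otimes> b) \<noteq> 2"
    proof
      assume "ord (a \<otimes> b) = 2"
      then have "(a \<otimes> b) \<otimes> (a \<otimes> b) = \<one>" using o abc by (simp add: numeral_2_eq_2)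
      then have "inv (a \<otimes> b) = a \<otimes> b" using abc by (simp add: inv_equality)
      then have "a \<otimes> b = b \<otimes> a" using ac bc invD[OF a] invD[OF b] by (simp add: inv_mult_group)
      then show False using n by simp
    qed
    ultimately have "ord (a \<otimes> b) = 3" by blast
    then have "(a \<otimes> b) \<otimes> (a \<otimes> b) \<otimes> (a \<otimes> b) = \<one>" using o abc by (simp add: numeral_3_eq_3)
    then have "(a \<otimes> b \<otimes> a) \<otimes> (b \<otimes> a \<otimes> b) = \<one>" using ac bc by (simp add: m_assoc)
    then have "inv (b \<otimes> a \<otimes> b) = a \<otimes> b \<otimes> a" using ac bc by (simp add: inv_equality)
    moreover have "inv (b \<otimes> a \<otimes> b) = b \<otimes> a \<otimes> b"
      using ac bc invD[OF a] invD[OF b] by (simp add: inv_mult_group m_assoc)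
    ultimately show ?thesis by simp
  qed
  show ?thesis
    by (unfold_locales) (use DG invo clo tri in auto)
qed


theorem corollary2p10:
  fixes G :: "('a, 'b) monoid_scheme" and D :: "'a set"
  assumes "group G"
    and "d0 \<in> carrier G"
    and "D = {g \<otimes>\<^bsub>G\<^esub> d0 \<otimes>\<^bsub>G\<^esub> inv\<^bsub>G\<^esub> g | g. g \<in> carrier G}"
    and "\<forall>d\<in>D. d \<noteq> \<one>\<^bsub>G\<^esub> \<and> d \<otimes>\<^bsub>G\<^esub> d = \<one>\<^bsub>G\<^esub>"
    and "generate G D = carrier G"
    and "\<forall>d\<in>D. \<forall>e\<in>D. group.ord G (d \<otimes>\<^bsub>G\<^esub> e) \<in> {1, 2, 3}"
  shows "quotient_is_Lie G D \<longleftrightarrow>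
         (\<forall>S. fischer_affine_plane G D S \<longrightarrow> vanishing G D S)"
proof -
  interpret grp: group G by (rule assms(1))
  interpret tg G D by (rule grp.tg_intro[OF assms(2) assms(3) assms(4) assms(6)])
  show ?thesis
  proof
    assume Lie: "quotient_is_Lie G D"
    show "\<forall>S. fischer_affine_plane G D S \<longrightarrow> vanishing G D S"
    proof (intro allI impI)
      fix S assume P: "fischer_affine_plane G D S"
      obtain g where T: "tableg g" and rg: "range g = S" using plane_table[OF P] by blast
      have A: "{g x} \<in> algA D" for x using tg_D[OF T] by (simp add: algA_def)
      have "Jac {g (0,0)} {g (1,0)} {g (0,1)} \<in> algV G D"
        using Lie A unfolding quotient_is_Lie_def Jac_def by blast
      moreover have "Jac {g (0,0)} {g (1,0)} {g (0,1)} = S"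
      proof -
        have "chi (Jac {g (0,0)} {g (1,0)} {g (0,1)}) z = chi (range g) z" for z
          using jac_single[OF tg_D[OF T] tg_D[OF T] tg_D[OF T]] jt_plane[OF T] by simp
        then show ?thesis using rg by (simp add: set_eq_chi)
      qed
      ultimately show "vanishing G D S" by (simp add: algV_def)
    qed
  next
    assume H: "\<forall>S. fischer_affine_plane G D S \<longrightarrow> vanishing G D S"
    have c1: "algA_mult G P Q \<in> algV G D \<and> algA_mult G Q P \<in> algV G D"
      if P: "P \<in> algA D" and Q: "Q \<in> algV G D" for P Q
    proof -
      have Pf: "finite P" "P \<subseteq> D" using P by (auto simp: algA_def)
      have Qv: "vanishing G D Q" using Q by (simp add: algV_def)
      have Qf: "finite Q" "Q \<subseteq> D" using Qv by (auto simp: vanishing_def algA_def)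
      have "vanishing G D (algA_mult G P Q)" by (rule ideal[OF Pf Qv])
      moreover have "algA_mult G Q P = algA_mult G P Q" by (rule mult_comm[OF Qf Pf])
      ultimately show ?thesis by (simp add: algV_def)
    qed
    have c2: "algA_mult G P P \<in> algV G D" if P: "P \<in> algA D" for P
    proof -
      have Pf: "finite P" "P \<subseteq> D" using P by (auto simp: algA_def)
      show ?thesis using mult_self[OF Pf] vanishing_empty by (simp add: algV_def)
    qed
    have c3: "Jac P Q R \<in> algV G D" if P: "P \<in> algA D" and Q: "Q \<in> algA D" and R: "R \<in> algA D" for P Q R
    proof -
      have Pf: "finite P" "P \<subseteq> D" using P by (auto simp: algA_def)
      have Qf: "finite Q" "Q \<subseteq> D" using Q by (auto simp: algA_def)
      have Rf: "finite R" "R \<subseteq> D" using R by (auto simp: algA_def)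
      have "vanishing G D (Jac P Q R)"
        by (rule jac_van[OF Pf Qf Rf]) (rule jac_single_van[OF H])
      then show ?thesis by (simp add: algV_def)
    qed
    show "quotient_is_Lie G D"
      unfolding quotient_is_Lie_def using c1 c2 c3 unfolding Jac_def by blast
  qed
qed

end
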